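(* Let $U=(u_{ij})\in\mathcal{U}_d(\mathbb{C})$. For every $M\in\mathbb{N}$ there exist $D_1,\dots,D_{2M}\in\mathcal{DU}_d(\mathbb{C})$ such that for all $k,l\in\{1,\dots,d\}$, $$\left((P_U^TP_U)^M\right)_{kl}=0\iff\left(D_1U^\dagger D_2U\cdots D_{2M-1}U^\dagger D_{2M}U\right)_{kl}=0.$$
   Context: $\mathcal{U}_d(\mathbb{C})$ denotes the group of $d\times d$ unitary matrices and $\mathcal{DU}_d(\mathbb{C})$ its subgroup of diagonal unitary matrices. $P_U=(p_{ij})$ is the $0/1$ matrix with $p_{ij}=0$ if $u_{ij}=0$ and $p_{ij}=1$ if $u_{ij}\neq0$. *)

theory Defs
  imports "HOL-Analysis.Analysis"
begin

text \<open>Square matrices of size d are represented as complex^'n^'n with d = CARD('n).\<close>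

definition conj_transpose :: "complex^'n^'n \<Rightarrow> complex^'n^'n" where
  "conj_transpose A = (\<chi> i j. cnj (A $ j $ i))"

definition unitary_mat :: "complex^'n^'n \<Rightarrow> bool" where
  "unitary_mat U \<longleftrightarrow> U ** conj_transpose U = mat 1 \<and> conj_transpose U ** U = mat 1"

definition diag_unitary_mat :: "complex^'n^'n \<Rightarrow> bool" where
  "diag_unitary_mat D \<longleftrightarrow> (\<forall>i j. i \<noteq> j \<longrightarrow> D $ i $ j = 0) \<and> (\<forall>i. cmod (D $ i $ i) = 1)"

definition pattern_mat :: "complex^'n^'n \<Rightarrow> nat^'n^'n" where
  "pattern_mat U = (\<chi> i j. if U $ i $ j = 0 then 0 else 1)"

fun mat_pow :: "'a::semiring_1^'n^'n \<Rightarrow> nat \<Rightarrow> 'a^'n^'n" where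
  "mat_pow A 0 = mat 1"
| "mat_pow A (Suc m) = mat_pow A m ** A"

fun alt_prod :: "(nat \<Rightarrow> complex^'n^'n) \<Rightarrow> complex^'n^'n \<Rightarrow> nat \<Rightarrow> complex^'n^'n" where
  "alt_prod D U 0 = mat 1"
| "alt_prod D U (Suc m) =
     alt_prod D U m ** (D (2*m+1) ** conj_transpose U ** D (2*m+2) ** U)"

end

theory Submission
  imports Defs "HOL-Computational_Algebra.Polynomial"
begin

lemma unit_avoid:
  assumes "finite (S :: complex set)"
  shows "\<exists>t. cmod t = 1 \<and> t \<notin> S"
proof -
  have inj: "inj_on cis {0..1::real}"
  proof (rule inj_onI)
    fix x y :: real assume "x \<in> {0..1}" "y \<in> {0..1}" "cis x = cis y"
    moreover have "pi > 1" using pi_gt3 by linarith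
    ultimately show "x = y" by (metis Arg_cis atLeastAtMost_iff greaterThanAtMost_iff
          less_le_trans neg_less_0_iff_less order_le_less_trans pi_gt_zero order.trans less_imp_le)
  qed
  have "infinite (cis ` {0..1::real})"
    using finite_imageD[OF _ inj] infinite_Icc[of "0::real" 1] by auto
  then obtain t where "t \<in> cis ` {0..1::real}" "t \<notin> S"
    using assms by (meson finite_subset subsetI)
  then show ?thesis by (metis imageE norm_cis)
qed

lemma mat_diag_right:
  fixes A :: "'a::semiring_1^'n^'n"
  shows "(A ** (\<chi> i j. if i = j then e i else 0)) $ k $ j = A $ k $ j * e j"
  unfolding matrix_matrix_mult_def
  by (simp add: if_distrib[where f="\<lambda>x. _ * x"] sum.delta' cong: if_cong)

lemma lemL:
  fixes A V :: "complex^'n^'n"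
  shows "\<exists>E. diag_unitary_mat E \<and>
     (\<forall>k l. (A ** E ** V) $ k $ l \<noteq> 0 \<longleftrightarrow> (\<exists>j. A $ k $ j \<noteq> 0 \<and> V $ j $ l \<noteq> 0))"
proof -
  obtain f :: "'n \<Rightarrow> nat" where f: "inj f"
    using finite_imp_inj_to_nat_seg[of "UNIV :: 'n set"] by auto
  define p where "p k l = (\<Sum>j\<in>UNIV. monom (A $ k $ j * V $ j $ l) (f j))" for k l
  define E where "E t = (\<chi> i j. if i = j then t ^ f i else (0::complex))" for t :: complex
  have val: "(A ** E t ** V) $ k $ l = poly (p k l) t" for t k l
    unfolding p_def E_def
    unfolding matrix_matrix_mult_def[of "A ** _"] mat_diag_right
    by (simp add: poly_sum poly_monom mult_ac)
  have coeffp: "coeff (p k l) (f j) = A $ k $ j * V $ j $ l" for k l j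
  proof -
    have "coeff (p k l) (f j) = (\<Sum>i\<in>UNIV. if i = j then A $ k $ i * V $ i $ l else 0)"
      unfolding p_def coeff_sum coeff_monom
      by (intro sum.cong refl) (use f in \<open>auto simp: inj_eq\<close>)
    then show ?thesis by simp
  qed
  define S where "S = (\<Union>(k,l)\<in>{(k,l). p k l \<noteq> 0}. {x. poly (p k l) x = 0})"
  have "finite S" unfolding S_def
    by (intro finite_UN_I) (auto intro: poly_roots_finite)
  then obtain t where t: "cmod t = 1" "t \<notin> S" using unit_avoid by blast
  have "diag_unitary_mat (E t)"
    unfolding diag_unitary_mat_def E_def using t by (simp add: norm_power)
  moreover have "(A ** E t ** V) $ k $ l \<noteq> 0 \<longleftrightarrow> (\<exists>j. A $ k $ j \<noteq> 0 \<and> V $ j $ l \<noteq> 0)" for k l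
  proof
    assume h: "(A ** E t ** V) $ k $ l \<noteq> 0"
    show "\<exists>j. A $ k $ j \<noteq> 0 \<and> V $ j $ l \<noteq> 0"
    proof (rule ccontr)
      assume "\<not> ?thesis"
      then have "p k l = 0" unfolding p_def by (intro sum.neutral) auto
      then show False using h val by simp
    qed
  next
    assume "\<exists>j. A $ k $ j \<noteq> 0 \<and> V $ j $ l \<noteq> 0"
    then obtain j where "A $ k $ j \<noteq> 0" "V $ j $ l \<noteq> 0" by blast
    then have "p k l \<noteq> 0" using coeffp[of k l j] by auto
    then show "(A ** E t ** V) $ k $ l \<noteq> 0" using t val unfolding S_def by auto
  qed
  ultimately show ?thesis by blast
qed

lemma alt_prod_cong:
  "(\<And>j. j \<le> 2*m \<Longrightarrow> D j = D' j) \<Longrightarrow> alt_prod D U m = alt_prod D' U m"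
  by (induction m) auto

lemma nat_mult_nz:
  fixes X Y :: "nat^'n^'n"
  shows "(X ** Y) $ k $ l \<noteq> 0 \<longleftrightarrow> (\<exists>j. X $ k $ j \<noteq> 0 \<and> Y $ j $ l \<noteq> 0)"
  unfolding matrix_matrix_mult_def by simp

lemma Q_nz:
  "(transpose (pattern_mat U) ** pattern_mat U) $ j $ l \<noteq> 0 \<longleftrightarrow>
     (\<exists>i. U $ i $ j \<noteq> 0 \<and> U $ i $ l \<noteq> 0)"
  unfolding nat_mult_nz by (auto simp: transpose_def pattern_mat_def)

theorem lemma24:
  fixes U :: "complex^'n^'n" and M :: nat
  assumes "unitary_mat U"
  shows "\<exists>D :: nat \<Rightarrow> complex^'n^'n.
           (\<forall>j\<in>{1..2*M}. diag_unitary_mat (D j)) \<and>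
           (\<forall>k l. (mat_pow (transpose (pattern_mat U) ** pattern_mat U) M) $ k $ l = 0
                  \<longleftrightarrow> (alt_prod D U M) $ k $ l = 0)"
proof (induction M)
  case 0
  show ?case by (auto simp: mat_def)
next
  case (Suc m)
  let ?Q = "transpose (pattern_mat U) ** pattern_mat U"
  from Suc obtain D where D1: "\<forall>j\<in>{1..2*m}. diag_unitary_mat (D j)"
    and D2: "\<forall>k l. (mat_pow ?Q m) $ k $ l = 0 \<longleftrightarrow> (alt_prod D U m) $ k $ l = 0" by blast
  define A where "A = alt_prod D U m"
  obtain E1 where E1: "diag_unitary_mat E1"
    "\<forall>k l. (A ** E1 ** conj_transpose U) $ k $ l \<noteq> 0 \<longleftrightarrow>
        (\<exists>j. A $ k $ j \<noteq> 0 \<and> conj_transpose U $ j $ l \<noteq> 0)"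
    using lemL by blast
  obtain E2 where E2: "diag_unitary_mat E2"
    "\<forall>k l. (A ** E1 ** conj_transpose U ** E2 ** U) $ k $ l \<noteq> 0 \<longleftrightarrow>
        (\<exists>j. (A ** E1 ** conj_transpose U) $ k $ j \<noteq> 0 \<and> U $ j $ l \<noteq> 0)"
    using lemL by blast
  define D' where "D' = D(2*m+1 := E1, 2*m+2 := E2)"
  have same: "alt_prod D' U m = A" unfolding A_def
    by (rule alt_prod_cong) (auto simp: D'_def)
  have prod: "alt_prod D' U (Suc m) = A ** E1 ** conj_transpose U ** E2 ** U"
    using same by (simp add: D'_def matrix_mul_assoc)
  have "\<forall>j\<in>{1..2*Suc m}. diag_unitary_mat (D' j)"
    using D1 E1(1) E2(1) by (auto simp: D'_def)
  moreover have "(mat_pow ?Q (Suc m)) $ k $ l = 0 \<longleftrightarrow> (alt_prod D' U (Suc m)) $ k $ l = 0" for k l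
  proof -
    have "(mat_pow ?Q (Suc m)) $ k $ l \<noteq> 0 \<longleftrightarrow>
        (\<exists>j. A $ k $ j \<noteq> 0 \<and> (\<exists>i. U $ i $ j \<noteq> 0 \<and> U $ i $ l \<noteq> 0))"
      unfolding mat_pow.simps nat_mult_nz[of "mat_pow ?Q m"] Q_nz A_def using D2 by simp
    also have "\<dots> \<longleftrightarrow> (alt_prod D' U (Suc m)) $ k $ l \<noteq> 0"
      unfolding prod using E1(2) E2(2) by (auto simp: conj_transpose_def)
    finally show ?thesis by blast
  qed
  ultimately show ?case by blast
qed

end
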